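(* Let $\nabla$ be an ES combination operator satisfying (ESF2), (ESF7) and (ESF8). Then $\nabla$ satisfies (ESF-U).
   Context: Setting: epistemic space $(\mathcal E,B,\mathcal L_{\mathcal P})$ ($\mathcal E$ nonempty, $B:\mathcal E\to$ propositional formulas over finite $\mathcal P$, image modulo equivalence exactly the consistent formulas); agents form a well-ordered set $\mathcal S$; a society is a nonempty finite $N\subseteq\mathcal S$; an $N$-profile is $\Phi:N\to\mathcal E$, $E_i=\Phi(i)$, identified with $E_i$ if $N=\{i\}$; profiles on $\{i_1<\dots<i_n\}$, $\{j_1<\dots<j_m\}$ are equivalent ($\equiv$) if $n=m$ and entries coincide position-wise; $\Phi\upharpoonright_M$ restriction; partition $\{N_1,N_2\}$: nonempty disjoint parts with union $N$. An ES combination operator maps (profile, $E$) to $\nabla(\Phi,E)\in\mathcal E$. (ESF2): if $\Phi\equiv\Phi'$ and $B(E)\equiv B(E')$ then $B(\nabla(\Phi,E))\equiv B(\nabla(\Phi',E'))$. (ESF7): for every partition $\{N_1,N_2\}$ of $N$, $N$-profile $\Phi$, $E$: $B(\nabla(\Phi\upharpoonright_{N_1},E))\wedge B(\nabla(\Phi\upharpoonright_{N_2},E))\vdash B(\nabla(\Phi,E))$. (ESF8): if that conjunction is consistent, then $B(\nabla(\Phi,E))\vdash B(\nabla(\Phi\upharpoonright_{N_1},E))\wedge B(\nabla(\Phi\upharpoonright_{N_2},E))$. (ESF-U): for every society $N$, $N$-profile $\Phi$ and $E$, if $E_i=E_j$ for all $i,j\in N$ then $B(\nabla(\Phi,E))\equiv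 B(\nabla(E_i,E))$ for all $i\in N$. *)

theory Defs
  imports Main "HOL-Library.FuncSet"
begin

datatype 'p form =
    Var 'p
  | Bot
  | Top
  | Neg "'p form"
  | Conj "'p form" "'p form"
  | Disj "'p form" "'p form"
  | Imp "'p form" "'p form"

fun holds :: "('p \<Rightarrow> bool) \<Rightarrow> 'p form \<Rightarrow> bool" where
  "holds v (Var p) = v p"
| "holds v Bot = False"
| "holds v Top = True"
| "holds v (Neg f) = (\<not> holds v f)"
| "holds v (Conj f g) = (holds v f \<and> holds v g)"
| "holds v (Disj f g) = (holds v f \<or> holds v g)"
| "holds v (Imp f g) = (holds v f \<longrightarrow> holds v g)"

definition entails :: "'p form \<Rightarrow> 'p form \<Rightarrow> bool" where
  "entails f g \<longleftrightarrow> (\<forall>v. holds v f \<longrightarrow> holds v g)"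

definition equiv_form :: "'p form \<Rightarrow> 'p form \<Rightarrow> bool" where
  "equiv_form f g \<longleftrightarrow> (\<forall>v. holds v f = holds v g)"

definition consistent :: "'p form \<Rightarrow> bool" where
  "consistent f \<longleftrightarrow> (\<exists>v. holds v f)"

text \<open>The epistemic space is the type 'e (nonempty as every HOL type), with belief
  function B; the propositional variables form the finite type 'p. The image of B
  modulo equivalence is exactly the set of consistent formulas.\<close>

definition epistemic_space :: "('e \<Rightarrow> 'p form) \<Rightarrow> bool" where
  "epistemic_space B \<longleftrightarrow> finite (UNIV :: 'p set)
     \<and> (\<forall>E. consistent (B E))
     \<and> (\<forall>f. consistent f \<longrightarrow> (\<exists>E. equiv_form (B E) f))"

text \<open>An N-profile is represented as a function that is extensional on N (i.e. a function N \<rightarrow> E).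
  An ES combination operator is a function taking the society N, the N-profile and E.\<close>

definition society :: "'a set \<Rightarrow> bool" where
  "society N \<longleftrightarrow> finite N \<and> N \<noteq> {}"

definition profile :: "'a set \<Rightarrow> ('a \<Rightarrow> 'e) \<Rightarrow> bool" where
  "profile N \<Phi> \<longleftrightarrow> society N \<and> \<Phi> \<in> extensional N"

definition profile_equiv :: "'a::wellorder set \<Rightarrow> ('a \<Rightarrow> 'e) \<Rightarrow> 'a set \<Rightarrow> ('a \<Rightarrow> 'e) \<Rightarrow> bool" where
  "profile_equiv N \<Phi> M \<Psi> \<longleftrightarrow>
     map \<Phi> (sorted_list_of_set N) = map \<Psi> (sorted_list_of_set M)"

definition is_partition2 :: "'a set \<Rightarrow> 'a set \<Rightarrow> 'a set \<Rightarrow> bool" where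
  "is_partition2 N N1 N2 \<longleftrightarrow> N1 \<noteq> {} \<and> N2 \<noteq> {} \<and> N1 \<inter> N2 = {} \<and> N1 \<union> N2 = N"

type_synonym ('a, 'e) es_op = "'a set \<Rightarrow> ('a \<Rightarrow> 'e) \<Rightarrow> 'e \<Rightarrow> 'e"

definition ESF2 :: "('e \<Rightarrow> 'p form) \<Rightarrow> ('a::wellorder, 'e) es_op \<Rightarrow> bool" where
  "ESF2 B nabla \<longleftrightarrow> (\<forall>N \<Phi> M \<Psi> E E'.
     profile N \<Phi> \<longrightarrow> profile M \<Psi> \<longrightarrow> profile_equiv N \<Phi> M \<Psi> \<longrightarrow> equiv_form (B E) (B E') \<longrightarrow>
     equiv_form (B (nabla N \<Phi> E)) (B (nabla M \<Psi> E')))"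

definition ESF7 :: "('e \<Rightarrow> 'p form) \<Rightarrow> ('a, 'e) es_op \<Rightarrow> bool" where
  "ESF7 B nabla \<longleftrightarrow> (\<forall>N \<Phi> E N1 N2.
     profile N \<Phi> \<longrightarrow> is_partition2 N N1 N2 \<longrightarrow>
     entails (Conj (B (nabla N1 (restrict \<Phi> N1) E)) (B (nabla N2 (restrict \<Phi> N2) E)))
             (B (nabla N \<Phi> E)))"

definition ESF8 :: "('e \<Rightarrow> 'p form) \<Rightarrow> ('a, 'e) es_op \<Rightarrow> bool" where
  "ESF8 B nabla \<longleftrightarrow> (\<forall>N \<Phi> E N1 N2.
     profile N \<Phi> \<longrightarrow> is_partition2 N N1 N2 \<longrightarrow>
     consistent (Conj (B (nabla N1 (restrict \<Phi> N1) E)) (B (nabla N2 (restrict \<Phi> N2) E))) \<longrightarrow>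
     entails (B (nabla N \<Phi> E))
             (Conj (B (nabla N1 (restrict \<Phi> N1) E)) (B (nabla N2 (restrict \<Phi> N2) E))))"

text \<open>(ESF-U); the single-agent profile E_i is the {i}-profile restrict \<Phi> {i}.\<close>
definition ESF_U :: "('e \<Rightarrow> 'p form) \<Rightarrow> ('a, 'e) es_op \<Rightarrow> bool" where
  "ESF_U B nabla \<longleftrightarrow> (\<forall>N \<Phi> E.
     profile N \<Phi> \<longrightarrow> (\<forall>i\<in>N. \<forall>j\<in>N. \<Phi> i = \<Phi> j) \<longrightarrow>
     (\<forall>i\<in>N. equiv_form (B (nabla N \<Phi> E)) (B (nabla {i} (restrict \<Phi> {i}) E))))"

end

theory Submission
  imports Defs
begin

lemma sls1: "sorted_list_of_set {x::'a::linorder} = [x]"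
  using sorted_list_of_set_insert_remove[of "{}" x] by simp

lemma single_equiv:
  fixes B :: "'e \<Rightarrow> 'p form" and nabla :: "('a::wellorder, 'e) es_op"
  assumes e2: "ESF2 B nabla" and pr: "profile N \<Phi>" and eq: "\<forall>i\<in>N. \<forall>j\<in>N. \<Phi> i = \<Phi> j"
    and i: "i \<in> N" and j: "j \<in> N"
  shows "equiv_form (B (nabla {j} (restrict \<Phi> {j}) E)) (B (nabla {i} (restrict \<Phi> {i}) E))"
proof -
  have p: "profile {k} (restrict \<Phi> {k})" for k
    by (simp add: profile_def society_def)
  have "profile_equiv {j} (restrict \<Phi> {j}) {i} (restrict \<Phi> {i})"
  proof -
    have "\<Phi> j = \<Phi> i" using eq i j by blast
    then show ?thesis using i j unfolding profile_equiv_def sls1 by simp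
  qed
  moreover have "equiv_form (B E) (B E)" by (simp add: equiv_form_def)
  ultimately show ?thesis by (rule e2[unfolded ESF2_def, rule_format, OF p p])
qed

lemma main_ind:
  fixes B :: "'e \<Rightarrow> 'p form" and nabla :: "('a::wellorder, 'e) es_op"
  assumes es: "epistemic_space B"
    and e2: "ESF2 B nabla" and e7: "ESF7 B nabla" and e8: "ESF8 B nabla"
  shows "card N = n \<Longrightarrow> profile N \<Phi> \<Longrightarrow> \<forall>i\<in>N. \<forall>j\<in>N. \<Phi> i = \<Phi> j \<Longrightarrow> i \<in> N \<Longrightarrow>
    equiv_form (B (nabla N \<Phi> E)) (B (nabla {i} (restrict \<Phi> {i}) E))"
proof (induction n arbitrary: N \<Phi> i)
  case 0
  then show ?case by (auto simp: profile_def society_def)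
next
  case (Suc n)
  note pr = Suc.prems(2) and eq = Suc.prems(3) and i = Suc.prems(4)
  have fin: "finite N" using pr by (simp add: profile_def society_def)
  show ?case
  proof (cases "n = 0")
    case True
    then have "N = {i}" using Suc.prems(1) i fin by (metis One_nat_def card_1_singletonE singletonD)
    moreover have "\<Phi> \<in> extensional N" using pr by (simp add: profile_def)
    ultimately have "restrict \<Phi> {i} = \<Phi>" by (simp add: extensional_restrict)
    then show ?thesis using \<open>N = {i}\<close> by (simp add: equiv_form_def)
  next
    case False
    let ?M = "N - {i}"
    have cM: "card ?M = n" using Suc.prems(1) i fin by simp
    then have "?M \<noteq> {}" using False by (metis card.empty)
    then obtain j where j: "j \<in> ?M" by blast
    have prM: "profile ?M (restrict \<Phi> ?M)"
      using fin \<open>?M \<noteq> {}\<close> by (simp add: profile_def society_def)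
    have eqM: "\<forall>a\<in>?M. \<forall>b\<in>?M. restrict \<Phi> ?M a = restrict \<Phi> ?M b" using eq by auto
    have rr: "restrict (restrict \<Phi> ?M) {j} = restrict \<Phi> {j}"
      using j by (auto simp: restrict_def)
    have h1: "equiv_form (B (nabla ?M (restrict \<Phi> ?M) E)) (B (nabla {j} (restrict \<Phi> {j}) E))"
      using Suc.IH[OF cM prM eqM j] unfolding rr .
    have h2: "equiv_form (B (nabla {j} (restrict \<Phi> {j}) E)) (B (nabla {i} (restrict \<Phi> {i}) E))"
      using single_equiv[OF e2 pr eq i] j by blast
    have part: "is_partition2 N {i} ?M" using i \<open>?M \<noteq> {}\<close> by (auto simp: is_partition2_def)
    let ?phi = "B (nabla {i} (restrict \<Phi> {i}) E)"
    have con: "consistent ?phi" using es by (simp add: epistemic_space_def)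
    have hM: "\<forall>v. holds v (B (nabla ?M (restrict \<Phi> ?M) E)) = holds v ?phi"
      using h1 h2 by (simp add: equiv_form_def)
    have c2: "consistent (Conj ?phi (B (nabla ?M (restrict \<Phi> ?M) E)))"
      using con hM by (simp add: consistent_def)
    have a7: "entails (Conj ?phi (B (nabla ?M (restrict \<Phi> ?M) E))) (B (nabla N \<Phi> E))"
      using e7[unfolded ESF7_def, rule_format, OF pr part] .
    have a8: "entails (B (nabla N \<Phi> E)) (Conj ?phi (B (nabla ?M (restrict \<Phi> ?M) E)))"
      using e8[unfolded ESF8_def, rule_format, OF pr part c2] .
    show ?thesis unfolding equiv_form_def
    proof
      fix v
      show "holds v (B (nabla N \<Phi> E)) = holds v ?phi"
      proof
        assume "holds v (B (nabla N \<Phi> E))"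
        then have "holds v (Conj ?phi (B (nabla ?M (restrict \<Phi> ?M) E)))"
          using a8 unfolding entails_def by blast
        then show "holds v ?phi" by simp
      next
        assume "holds v ?phi"
        then have "holds v (Conj ?phi (B (nabla ?M (restrict \<Phi> ?M) E)))"
          using hM by simp
        then show "holds v (B (nabla N \<Phi> E))" using a7 unfolding entails_def by blast
      qed
    qed
  qed
qed

theorem mainTheorem8:
  fixes B :: "'e \<Rightarrow> 'p form"
    and nabla :: "('a::wellorder, 'e) es_op"
  assumes "epistemic_space B"
    and "ESF2 B nabla" and "ESF7 B nabla" and "ESF8 B nabla"
  shows "ESF_U B nabla"
  unfolding ESF_U_def
proof (intro allI impI ballI)
  fix N :: "'a set" and \<Phi> :: "'a \<Rightarrow> 'e" and E i
  assume "profile N \<Phi>" "\<forall>i\<in>N. \<forall>j\<in>N. \<Phi> i = \<Phi> j" "i \<in> N"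
  then show "equiv_form (B (nabla N \<Phi> E)) (B (nabla {i} (restrict \<Phi> {i}) E))"
    by (rule main_ind[OF assms refl])
qed

end
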